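(* Let $\omega\in\Omega^q(\log\mathscr{X}/\mathscr{C})$ and $\theta\in\mathrm{Der}(-\log\mathscr{X})$. Then the contraction $\langle\omega,\theta\rangle$ belongs to $\Omega^{q-1}(\log\mathscr{X}/\mathscr{C})$.
   Context: $V=\mathbb{C}^\ell$, $S=\mathbb{C}[x_1,\dots,x_\ell]$, $\Omega^q$ the module of polynomial $q$-forms. $\mathscr{X}$ is a central equidimensional subspace arrangement of codimension $k$ (finite set of linear subspaces of codimension $k$) with radical ideal $\mathcal{I}_\mathscr{X}$; $\mathscr{C}\supseteq\mathscr{X}$ is a reduced complete intersection subspace arrangement of codimension $k$ with $\mathcal{I}_\mathscr{C}=(h_1,\dots,h_k)$ radical, $h_1,\dots,h_k\in\mathcal{I}_\mathscr{X}$ a homogeneous regular sequence, $h=h_1\cdots h_k$. $\Omega^q(\log\mathscr{X}/\mathscr{C})=\{\omega\in\frac1h\Omega^q:\ \mathcal{I}_\mathscr{X}\omega\subseteq\frac1h\mathcal{I}_\mathscr{C}\Omega^q,\ d(\mathcal{I}_\mathscr{X})\wedge\omega\subseteq\frac1h\mathcal{I}_\mathscr{C}\Omega^{q+1}\}$. $\mathrm{Der}(-\log\mathscr{X})=\{\delta$ polynomial vector field : $\delta(\mathcal{I}_\mathscr{X})\subseteq\mathcal{I}_\mathscr{X}\}$. *)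

theory Defs
  imports "HOL-Analysis.Analysis" "HOL-Library.Poly_Mapping"
begin

text \<open>Polynomials in S = C[x_i : i in 'n] (ell = CARD('n) variables), as finitely
  supported maps from exponent vectors (monomials) to coefficients.\<close>
type_synonym 'n mpoly = "('n \<Rightarrow>\<^sub>0 nat) \<Rightarrow>\<^sub>0 complex"

definition mp_eval :: "'n mpoly \<Rightarrow> complex ^ 'n \<Rightarrow> complex" where
  "mp_eval p v = (\<Sum>m\<in>Poly_Mapping.keys p. Poly_Mapping.lookup p m * (\<Prod>i\<in>Poly_Mapping.keys (m::'n \<Rightarrow>\<^sub>0 nat). (v $ i) ^ Poly_Mapping.lookup m i))"

definition mp_pderiv :: "'n \<Rightarrow> 'n mpoly \<Rightarrow> 'n mpoly" where
  "mp_pderiv i p = (\<Sum>m\<in>Poly_Mapping.keys p.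
      Poly_Mapping.single (m - Poly_Mapping.single i 1) (Poly_Mapping.lookup p m * of_nat (Poly_Mapping.lookup m i)))"

definition mp_homogeneous :: "('n::finite) mpoly \<Rightarrow> bool" where
  "mp_homogeneous p \<longleftrightarrow> (\<exists>d. \<forall>m\<in>Poly_Mapping.keys p. (\<Sum>i\<in>UNIV. Poly_Mapping.lookup m i) = d)"

definition vanishing_ideal :: "(complex ^ 'n) set \<Rightarrow> 'n mpoly set" where
  "vanishing_ideal Z = {p. \<forall>v\<in>Z. mp_eval p v = 0}"

definition gen_ideal :: "(nat \<Rightarrow> 'n mpoly) \<Rightarrow> nat \<Rightarrow> 'n mpoly set" where
  "gen_ideal h j = {p. \<exists>a. p = (\<Sum>i<j. a i * h i)}"

definition radical :: "'n mpoly set \<Rightarrow> bool" where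
  "radical I \<longleftrightarrow> (\<forall>p n. 0 < n \<longrightarrow> p ^ n \<in> I \<longrightarrow> p \<in> I)"

definition regular_sequence :: "(nat \<Rightarrow> 'n mpoly) \<Rightarrow> nat \<Rightarrow> bool" where
  "regular_sequence h k \<longleftrightarrow> 1 \<notin> gen_ideal h k \<and>
     (\<forall>j<k. \<forall>a. a * h j \<in> gen_ideal h j \<longrightarrow> a \<in> gen_ideal h j)"

definition codim_subspace :: "nat \<Rightarrow> (complex ^ ('n::finite)) set \<Rightarrow> bool" where
  "codim_subspace k L \<longleftrightarrow> vec.subspace L \<and> vec.dim L + k = CARD('n)"

text \<open>Polynomial q-forms: a q-form is given by its coefficients omega S of dx_S,
  S ranging over q-element subsets of the variables (dx_S = wedge of dx_i, i in S, increasing).\<close>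
type_synonym 'n form = "'n set \<Rightarrow> 'n mpoly"

definition is_form :: "nat \<Rightarrow> ('n::finite) form \<Rightarrow> bool" where
  "is_form q w \<longleftrightarrow> (\<forall>S. card S \<noteq> q \<longrightarrow> w S = 0)"

definition pos_sign :: "'n::linorder set \<Rightarrow> 'n \<Rightarrow> complex" where
  "pos_sign S i = (-1) ^ card {j\<in>S. j < i}"

definition d_wedge :: "('n::{finite,linorder}) mpoly \<Rightarrow> 'n form \<Rightarrow> 'n form" where
  "d_wedge f w T = (\<Sum>i\<in>T. Poly_Mapping.single 0 (pos_sign T i) * mp_pderiv i f * w (T - {i}))"

definition contraction :: "('n::{finite,linorder}) form \<Rightarrow> ('n \<Rightarrow> 'n mpoly) \<Rightarrow> 'n form" where
  "contraction w \<theta> S = (\<Sum>i\<in>UNIV - S. Poly_Mapping.single 0 (pos_sign S i) * \<theta> i * w (insert i S))"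

definition vf_apply :: "('n::finite \<Rightarrow> 'n mpoly) \<Rightarrow> 'n mpoly \<Rightarrow> 'n mpoly" where
  "vf_apply \<theta> f = (\<Sum>i\<in>UNIV. \<theta> i * mp_pderiv i f)"

definition form_in :: "'n mpoly set \<Rightarrow> 'n form \<Rightarrow> bool" where
  "form_in I w \<longleftrightarrow> (\<forall>S. w S \<in> I)"

text \<open>Omega^q(log X/C): we represent a rational form omega in (1/h) Omega^q by its
  numerator eta = h * omega in Omega^q.  Then
  I_X omega in (1/h) I_C Omega^q iff I_X eta in I_C Omega^q, and
  d(I_X) wedge omega in (1/h) I_C Omega^(q+1) iff d(I_X) wedge eta in I_C Omega^(q+1).\<close>
definition log_forms_num :: "'n mpoly set \<Rightarrow> 'n mpoly set \<Rightarrow> nat \<Rightarrow> ('n::{finite,linorder}) form set" where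
  "log_forms_num IX IC q = {\<eta>. is_form q \<eta> \<and>
      (\<forall>f\<in>IX. form_in IC (\<lambda>S. f * \<eta> S)) \<and>
      (\<forall>f\<in>IX. form_in IC (d_wedge f \<eta>))}"

definition der_log :: "'n mpoly set \<Rightarrow> ('n::finite \<Rightarrow> 'n mpoly) set" where
  "der_log IX = {\<theta>. \<forall>f\<in>IX. vf_apply \<theta> f \<in> IX}"

end

theory Submission imports Defs begin

definition cnt :: "'n::linorder set \<Rightarrow> 'n \<Rightarrow> nat" where "cnt S i = card {j\<in>S. j < i}"

lemma single_sign: "Poly_Mapping.single 0 (pos_sign S i) = ((-1) ^ cnt S i :: 'n::{finite,linorder} mpoly)"
proof -
  have "\<And>n. Poly_Mapping.single 0 ((-1::complex) ^ n) = ((-1) ^ n :: 'n mpoly)"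
  proof -
    fix n show "Poly_Mapping.single 0 ((-1::complex) ^ n) = ((-1) ^ n :: 'n mpoly)"
      by (induct n) (simp_all add: mult_single[symmetric] single_uminus)
  qed
  then show ?thesis by (simp add: pos_sign_def cnt_def)
qed

lemma cnt_remove: 
  fixes T :: "'n::{finite,linorder} set"
  assumes "i \<in> T" "j \<noteq> i"
  shows "cnt T j = cnt (T - {i}) j + (if i < j then 1 else 0)"
proof -
  have fin: "finite {x\<in>T. x < j}" by simp
  show ?thesis
  proof (cases "i < j")
    case True
    then have "{x\<in>T - {i}. x < j} = {x\<in>T. x < j} - {i}" "i \<in> {x\<in>T. x < j}" using assms by auto
    then show ?thesis unfolding cnt_def using True fin
      using card_Suc_Diff1[OF fin \<open>i \<in> {x\<in>T. x < j}\<close>] by simp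
  next
    case False
    then have "{x\<in>T - {i}. x < j} = {x\<in>T. x < j}" using assms by auto
    then show ?thesis unfolding cnt_def using False by simp
  qed
qed

lemma cnt_remove_self: "cnt (T - {i}) i = cnt T i"
  unfolding cnt_def by (rule arg_cong[where f=card]) auto

lemma sq_sign: "((-1::'a::comm_ring_1)^n) * (-1)^n = 1"
  by (simp add: power_mult_distrib[symmetric])

lemma cnt_insert: 
  fixes T :: "'n::{finite,linorder} set"
  assumes "j \<notin> T" "i \<in> T"
  shows "cnt (insert j T) i = cnt T i + (if j < i then 1 else 0)"
proof -
  have "i \<noteq> j" using assms by auto
  have "cnt (insert j T) i = cnt (insert j T - {j}) i + (if j < i then 1 else 0)"
    by (rule cnt_remove) (use \<open>i \<noteq> j\<close> in auto)
  moreover have "insert j T - {j} = T" using assms by auto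
  ultimately show ?thesis by simp
qed

lemma cnt_insert_self: "cnt (insert j T) j = cnt T j"
  unfolding cnt_def by (rule arg_cong[where f=card]) auto

lemma key:
  fixes \<eta> :: "'n::{finite,linorder} form" and \<theta> :: "'n \<Rightarrow> 'n mpoly" and f :: "'n mpoly"
  shows "d_wedge f (contraction \<eta> \<theta>) T + contraction (d_wedge f \<eta>) \<theta> T = vf_apply \<theta> f * \<eta> T"
proof -
  define p where "p i = mp_pderiv i f" for i
  define e :: "'n set \<Rightarrow> 'n \<Rightarrow> 'n mpoly" where "e S i = (-1) ^ cnt S i" for S i
  define U where "U = UNIV - T"
  define A where "A i j = e T i * p i * (e (T - {i}) j * \<theta> j * \<eta> (insert j (T - {i})))" for i j
  define B where "B j i = e T j * \<theta> j * (e (insert j T) i * p i * \<eta> (insert j T - {i}))" for i j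
  have ee: "e S i * e S i = 1" for S i unfolding e_def by (rule sq_sign)
  have L: "d_wedge f (contraction \<eta> \<theta>) T = (\<Sum>i\<in>T. p i * \<theta> i * \<eta> T) + (\<Sum>i\<in>T. \<Sum>j\<in>U. A i j)"
  proof -
    have "d_wedge f (contraction \<eta> \<theta>) T = (\<Sum>i\<in>T. e T i * p i *
       (\<Sum>j\<in>UNIV - (T - {i}). e (T - {i}) j * \<theta> j * \<eta> (insert j (T - {i}))))"
      unfolding d_wedge_def contraction_def single_sign e_def p_def by simp
    also have "\<dots> = (\<Sum>i\<in>T. p i * \<theta> i * \<eta> T + (\<Sum>j\<in>U. A i j))"
    proof (rule sum.cong[OF refl])
      fix i assume i: "i \<in> T"
      have u: "UNIV - (T - {i}) = insert i U" "i \<notin> U" using i by (auto simp: U_def)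
      have it: "insert i (T - {i}) = T" using i by auto
      have "e T i * p i * (\<Sum>j\<in>UNIV - (T - {i}). e (T - {i}) j * \<theta> j * \<eta> (insert j (T - {i})))
          = e T i * p i * (e (T - {i}) i * \<theta> i * \<eta> T) + (\<Sum>j\<in>U. A i j)"
        unfolding u(1) using u(2) i by (simp add: sum.insert it insert_absorb A_def distrib_left sum_distrib_left)
      also have "e T i * p i * (e (T - {i}) i * \<theta> i * \<eta> T) = (e T i * e T i) * (p i * \<theta> i * \<eta> T)"
        by (simp add: e_def cnt_remove_self mult_ac)
      finally show "e T i * p i * (\<Sum>j\<in>UNIV - (T - {i}). e (T - {i}) j * \<theta> j * \<eta> (insert j (T - {i})))
          = p i * \<theta> i * \<eta> T + (\<Sum>j\<in>U. A i j)" by (simp add: ee)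
    qed
    finally show ?thesis by (simp add: sum.distrib)
  qed
  have R: "contraction (d_wedge f \<eta>) \<theta> T = (\<Sum>j\<in>U. p j * \<theta> j * \<eta> T) + (\<Sum>j\<in>U. \<Sum>i\<in>T. B j i)"
  proof -
    have "contraction (d_wedge f \<eta>) \<theta> T = (\<Sum>j\<in>U. e T j * \<theta> j *
       (\<Sum>i\<in>insert j T. e (insert j T) i * p i * \<eta> (insert j T - {i})))"
      unfolding d_wedge_def contraction_def single_sign e_def p_def U_def by simp
    also have "\<dots> = (\<Sum>j\<in>U. p j * \<theta> j * \<eta> T + (\<Sum>i\<in>T. B j i))"
    proof (rule sum.cong[OF refl])
      fix j assume j: "j \<in> U"
      have jt: "j \<notin> T" using j by (auto simp: U_def)
      have it: "insert j T - {j} = T" using jt by auto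
      have "e T j * \<theta> j * (\<Sum>i\<in>insert j T. e (insert j T) i * p i * \<eta> (insert j T - {i}))
          = e T j * \<theta> j * (e (insert j T) j * p j * \<eta> T) + (\<Sum>i\<in>T. B j i)"
        using jt by (simp add: sum.insert it B_def distrib_left sum_distrib_left)
      also have "e T j * \<theta> j * (e (insert j T) j * p j * \<eta> T) = (e T j * e T j) * (p j * \<theta> j * \<eta> T)"
        by (simp add: e_def cnt_insert_self mult_ac)
      finally show "e T j * \<theta> j * (\<Sum>i\<in>insert j T. e (insert j T) i * p i * \<eta> (insert j T - {i}))
          = p j * \<theta> j * \<eta> T + (\<Sum>i\<in>T. B j i)" by (simp add: ee)
    qed
    finally show ?thesis by (simp add: sum.distrib)
  qed
  have AB: "A i j + B j i = 0" if i: "i \<in> T" and j: "j \<in> U" for i j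
  proof -
    have jt: "j \<notin> T" using j by (auto simp: U_def)
    have ij: "j \<noteq> i" using i jt by auto
    have s: "insert j T - {i} = insert j (T - {i})" using ij by auto
    have c1: "e T j = e (T - {i}) j * (if i < j then -1 else 1)"
      unfolding e_def cnt_remove[OF i ij] by (simp add: power_add)
    have c2: "e (insert j T) i = e T i * (if j < i then -1 else 1)"
      unfolding e_def cnt_insert[OF jt i] by (simp add: power_add)
    have c3: "(if i < j then -1 else 1) * (if j < i then -1 else 1) = (-1 :: 'n mpoly)"
      using ij by (cases "i < j") auto
    have "B j i = ((if i < j then -1 else 1) * (if j < i then -1 else 1)) * A i j"
      unfolding A_def B_def c1 c2 s by (simp add: mult_ac)
    then show ?thesis using c3 by simp
  qed
  have sw: "(\<Sum>j\<in>U. \<Sum>i\<in>T. B j i) = (\<Sum>i\<in>T. \<Sum>j\<in>U. B j i)" by (rule sum.swap)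
  have z: "(\<Sum>i\<in>T. \<Sum>j\<in>U. A i j) + (\<Sum>i\<in>T. \<Sum>j\<in>U. B j i) = 0"
    by (simp add: sum.distrib[symmetric] AB)
  have V: "vf_apply \<theta> f = (\<Sum>i\<in>T. p i * \<theta> i) + (\<Sum>i\<in>U. p i * \<theta> i)"
  proof -
    have "UNIV = T \<union> U" "T \<inter> U = {}" by (auto simp: U_def)
    then have "(\<Sum>i\<in>UNIV. \<theta> i * p i) = (\<Sum>i\<in>T. \<theta> i * p i) + (\<Sum>i\<in>U. \<theta> i * p i)"
      using sum.union_disjoint[of T U "\<lambda>i. \<theta> i * p i"] by simp
    then show ?thesis unfolding vf_apply_def p_def by (simp add: mult.commute)
  qed
  have m: "(\<Sum>i\<in>T. p i * \<theta> i * \<eta> T) + (\<Sum>j\<in>U. p j * \<theta> j * \<eta> T)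
     = ((\<Sum>i\<in>T. p i * \<theta> i) + (\<Sum>i\<in>U. p i * \<theta> i)) * \<eta> T"
    by (simp add: sum_distrib_right distrib_right)
  have "d_wedge f (contraction \<eta> \<theta>) T + contraction (d_wedge f \<eta>) \<theta> T
     = ((\<Sum>i\<in>T. p i * \<theta> i * \<eta> T) + (\<Sum>j\<in>U. p j * \<theta> j * \<eta> T))
       + ((\<Sum>i\<in>T. \<Sum>j\<in>U. A i j) + (\<Sum>i\<in>T. \<Sum>j\<in>U. B j i))"
    unfolding L R sw by (simp add: algebra_simps)
  also have "\<dots> = vf_apply \<theta> f * \<eta> T" unfolding z m V by simp
  finally show ?thesis .
qed

lemma gi_add: "p \<in> gen_ideal h k \<Longrightarrow> q \<in> gen_ideal h k \<Longrightarrow> p + q \<in> gen_ideal h k"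
  unfolding gen_ideal_def
proof clarsimp
  fix a b show "\<exists>c. (\<Sum>i<k. a i * h i) + (\<Sum>i<k. b i * h i) = (\<Sum>i<k. c i * h i)"
    by (rule exI[of _ "\<lambda>i. a i + b i"]) (simp add: sum.distrib distrib_right)
qed

lemma gi_mult: "p \<in> gen_ideal h k \<Longrightarrow> r * p \<in> gen_ideal h k"
  unfolding gen_ideal_def
proof clarsimp
  fix a show "\<exists>c. r * (\<Sum>i<k. a i * h i) = (\<Sum>i<k. c i * h i)"
    by (rule exI[of _ "\<lambda>i. r * a i"]) (simp add: sum_distrib_left mult_ac)
qed

lemma gi_zero: "0 \<in> gen_ideal h k"
  unfolding gen_ideal_def by (rule CollectI, rule exI[of _ "\<lambda>i. 0"]) simp

lemma gi_diff: "p \<in> gen_ideal h k \<Longrightarrow> q \<in> gen_ideal h k \<Longrightarrow> p - q \<in> gen_ideal h k"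
  using gi_add[of p h k "(-1) * q"] gi_mult[of q h k "-1"] by simp

lemma gi_sum: "finite A \<Longrightarrow> (\<And>x. x \<in> A \<Longrightarrow> g x \<in> gen_ideal h k) \<Longrightarrow> sum g A \<in> gen_ideal h k"
  by (induct A rule: finite_induct) (auto intro: gi_add gi_zero)

lemma contraction_in:
  fixes w :: "'n::{finite,linorder} form"
  assumes "form_in (gen_ideal h k) w"
  shows "contraction w \<theta> S \<in> gen_ideal h k"
  unfolding contraction_def
proof (rule gi_sum)
  fix i
  have "w (insert i S) \<in> gen_ideal h k" using assms unfolding form_in_def by blast
  then show "Poly_Mapping.single 0 (pos_sign S i) * \<theta> i * w (insert i S) \<in> gen_ideal h k"
    using gi_mult[of "w (insert i S)" h k "Poly_Mapping.single 0 (pos_sign S i) * \<theta> i"] by simp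
qed simp

theorem lemma3p7:
  fixes X C :: "(complex ^ ('n::{finite,linorder})) set set"
    and k q :: nat and hs :: "nat \<Rightarrow> 'n mpoly"
    and \<eta> :: "'n form" and \<theta> :: "'n \<Rightarrow> 'n mpoly"
  assumes X_arr: "finite X" "\<forall>L\<in>X. codim_subspace k L"
    and C_arr: "finite C" "\<forall>L\<in>C. codim_subspace k L" and XC: "X \<subseteq> C"
    and IC: "vanishing_ideal (\<Union>C) = gen_ideal hs k" "radical (gen_ideal hs k)"
    and hs_X: "\<forall>j<k. hs j \<in> vanishing_ideal (\<Union>X)"
    and hs_hom: "\<forall>j<k. mp_homogeneous (hs j)"
    and hs_reg: "regular_sequence hs k"
    and omega: "\<eta> \<in> log_forms_num (vanishing_ideal (\<Union>X)) (gen_ideal hs k) q"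
    and theta: "\<theta> \<in> der_log (vanishing_ideal (\<Union>X))"
  shows "contraction \<eta> \<theta> \<in> log_forms_num (vanishing_ideal (\<Union>X)) (gen_ideal hs k) (q - 1)"
proof -
  define IX where "IX = vanishing_ideal (\<Union>X)"
  define I where "I = gen_ideal hs k"
  have form: "is_form q \<eta>" and m1: "\<And>f. f \<in> IX \<Longrightarrow> form_in I (\<lambda>S. f * \<eta> S)"
    and m2: "\<And>f. f \<in> IX \<Longrightarrow> form_in I (d_wedge f \<eta>)"
    using omega unfolding log_forms_num_def IX_def I_def by auto
  have th: "\<And>f. f \<in> IX \<Longrightarrow> vf_apply \<theta> f \<in> IX" using theta unfolding der_log_def IX_def by auto
  have "is_form (q - 1) (contraction \<eta> \<theta>)"
    unfolding is_form_def
  proof (intro allI impI)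
    fix S :: "'n set" assume cS: "card S \<noteq> q - 1"
    have "\<eta> (insert i S) = 0" if "i \<in> UNIV - S" for i
    proof -
      have "card (insert i S) = Suc (card S)" using that by simp
      then have "card (insert i S) \<noteq> q" using cS by auto
      then show ?thesis using form unfolding is_form_def by blast
    qed
    then show "contraction \<eta> \<theta> S = 0" unfolding contraction_def by simp
  qed
  moreover have "form_in I (\<lambda>S. f * contraction \<eta> \<theta> S)" if f: "f \<in> IX" for f
  proof -
    have "f * contraction \<eta> \<theta> S = contraction (\<lambda>S. f * \<eta> S) \<theta> S" for S
      unfolding contraction_def by (simp add: sum_distrib_left mult_ac)
    then show ?thesis using contraction_in[OF m1[OF f, unfolded I_def]]
      unfolding form_in_def I_def by simp
  qed
  moreover have "form_in I (d_wedge f (contraction \<eta> \<theta>))" if f: "f \<in> IX" for f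
    unfolding form_in_def
  proof
    fix T
    have e: "d_wedge f (contraction \<eta> \<theta>) T = vf_apply \<theta> f * \<eta> T - contraction (d_wedge f \<eta>) \<theta> T"
      using key[of f \<eta> \<theta> T] by (simp add: eq_diff_eq)
    have a: "vf_apply \<theta> f * \<eta> T \<in> I" using m1[OF th[OF f]] unfolding form_in_def by simp
    have b: "contraction (d_wedge f \<eta>) \<theta> T \<in> I"
      using contraction_in[OF m2[OF f, unfolded I_def]] unfolding I_def .
    show "d_wedge f (contraction \<eta> \<theta>) T \<in> I" unfolding e using a b unfolding I_def by (rule gi_diff)
  qed
  ultimately have "contraction \<eta> \<theta> \<in> log_forms_num IX I (q - 1)"
    unfolding log_forms_num_def by blast
  then show ?thesis unfolding IX_def I_def .
qed

end
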